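(* Fix $n\ge0$, a formula $\phi\in\mathcal{L}^1$ and a label $w$. (i) If $\mathtt{Prove_n}(w:\phi)$ returns true, then $w:\phi$ is derivable in $\mathsf{Ldm}_{n}^{1}\mathsf{L}$. (ii) If $\mathtt{Prove_n}(w:\phi)$ returns false, then $w:\phi$ is not derivable in $\mathsf{Ldm}_{n}^{1}\mathsf{L}$.
   Context: Single-agent setting: $Ag=\{1\}$. Formulas $\phi ::= p \mid \overline{p} \mid (\phi\wedge\phi) \mid (\phi\vee\phi) \mid \Box\phi \mid \Diamond\phi \mid [1]\phi \mid \langle 1\rangle\phi$; $\overline{\phi}$ swaps $p/\overline{p}$, $\wedge/\vee$, $\Box/\Diamond$, $[1]/\langle 1\rangle$. A labelled sequent $\mathcal{R},\Gamma$ consists of a multiset $\mathcal{R}$ of relational atoms $\mathcal{R}_1xy$ and a multiset $\Gamma$ of labelled formulas $x:\phi$. Calculus $\mathsf{Ldm}_{n}^{1}\mathsf{L}$ (premise(s) / conclusion; derivations are finite trees with $(\mathsf{id})$ leaves): $(\mathsf{id})$: / $\mathcal{R}, w:p, w:\overline{p},\Gamma$. $(\wedge)$: $\mathcal{R}, w:\phi\wedge\psi, w:\phi,\Gamma$ and $\mathcal{R}, w:\phi\wedge\psi, w:\psi,\Gamma$ / $\mathcal{R}, w:\phi\wedge\psi,\Gamma$. $(\vee)$: $\mathcal{R}, w:\phi\vee\psi, w:\phi, w:\psi,\Gamma$ / $\mathcal{R}, w:\phi\vee\psi,\Gamma$. $(\Box)$: $\mathcal{R}, w:\Box\phi, v:\phi,\Gamma$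 / $\mathcal{R}, w:\Box\phi,\Gamma$ ($v$ fresh). $(\Diamond)$: $\mathcal{R}, w:\Diamond\phi, u:\phi,\Gamma$ / $\mathcal{R}, w:\Diamond\phi,\Gamma$. $(\mathsf{IOA})$: $\mathcal{R},\mathcal{R}_1uv,\Gamma$ / $\mathcal{R},\Gamma$ ($v$ fresh). $([1])$: $\mathcal{R},\mathcal{R}_1wv, w:[1]\phi, v:\phi,\Gamma$ / $\mathcal{R}, w:[1]\phi,\Gamma$ ($v$ fresh). $(\mathsf{Pr}_1)$: $\mathcal{R}, w:\langle 1\rangle\phi, u:\phi,\Gamma$ / $\mathcal{R}, w:\langle 1\rangle\phi,\Gamma$, applicable only if $w=u$ or there are labels $w=z_0,\dots,z_k=u$ ($k\ge1$) with $\mathcal{R}_1z_lz_{l+1}\in\mathcal{R}$ or $\mathcal{R}_1z_{l+1}z_l\in\mathcal{R}$ for each $l<k$. $(\mathsf{APC}^1_n)$ (only if $n>0$): premises $\mathcal{R},\mathcal{R}_1w_kw_j,\Gamma$ for all $0\le k\le n-1$, $k+1\le j\le n$ / $\mathcal{R},\Gamma$. "Fresh" means not occurring in the conclusion. Graphs. $G(\Lambda)$ has the labels of $\Lambda$ as vertices and an edge $(x,y)$ for each $\mathcal{R}_1xy\in\Lambda$. A tree is a graph with a root having exactly one directed path to every other node; a forest is a disjoint union of trees. $\Lambda$ is forestlike iff $G(\Lambda)$ is a forest; its trees are choice-trees; $CT(w)$ is the choice-tree containing $w$. For forestlike $\Lambda$ and label $w$: $w$ is saturated iff (i) $w:\phi\in\Lambda$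 implies $w:\overline{\phi}\notin\Lambda$, (ii) $w:\phi\vee\psi\in\Lambda$ implies $w:\phi,w:\psi\in\Lambda$, (iii) $w:\phi\wedge\psi\in\Lambda$ implies $w:\phi\in\Lambda$ or $w:\psi\in\Lambda$. $w$ is $\Box$-realized iff for each $w:\Box\phi\in\Lambda$ some label $u$ has $u:\phi\in\Lambda$; $[1]$-realized iff for each $w:[1]\phi\in\Lambda$ some $u\in CT(w)$ has $u:\phi\in\Lambda$; $\Diamond$-propagated iff for each $w:\Diamond\phi\in\Lambda$, $u:\phi\in\Lambda$ for all labels $u$; $\langle1\rangle$-propagated iff for each $w:\langle1\rangle\phi\in\Lambda$, $u:\phi\in\Lambda$ for all $u\in CT(w)$. $\Lambda$ is $n$-choice consistent ($n>0$) iff $G(\Lambda)$ has at most $n$ choice-trees. $\Lambda$ is stable iff all labels are saturated, $\Box$- and $[1]$-realized, $\Diamond$- and $\langle1\rangle$-propagated, and (when $n>0$) $\Lambda$ is $n$-choice consistent. Algorithm $\mathtt{Prove_n}(\mathcal{R},\Gamma)$, steps tried in order: 1. If $w:p$ and $w:\overline{p}$ are both present, return true. 2. If the sequent is stable, return false. 3. If some $w$ is not saturated: (i) if $w:\phi\vee\psi$ is present but $w:\phi$ or $w:\psi$ absent, return $\mathtt{Prove_n}(\mathcal{R},w:\phi,w:\psi,\Gamma)$; (ii) if $w:\phi\wedge\psi$ is present but neither $w:\phi$ nor $w:\psi$, return false if $\mathtt{Prove_n}(\mathcal{R},w:\phi,\Gamma)$ or $\mathtt{Prove_n}(\mathcal{R},w:\psi,\Gamma)$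 returns false, else true. 4. If some $w:\langle1\rangle\phi$ is present and some $u\in CT(w)$ has $u:\phi$ absent, return $\mathtt{Prove_n}(\mathcal{R},u:\phi,\Gamma)$. 5. If some $w:\Diamond\phi$ is present and some label $u$ has $u:\phi$ absent, return $\mathtt{Prove_n}(\mathcal{R},u:\phi,\Gamma)$. 6. If some $w:[1]\phi$ is present with $u:\phi$ absent for all $u\in CT(w)$, return $\mathtt{Prove_n}(\mathcal{R},\mathcal{R}_1wv,v:\phi,\Gamma)$, $v$ fresh. 7. If some $w:\Box\phi$ is present with $u:\phi$ absent for all labels $u$, return $\mathtt{Prove_n}(\mathcal{R},v:\phi,\Gamma)$, $v$ fresh. 8. (Only when $n>0$.) If not $n$-choice consistent, pick distinct choice-tree roots $w_0,\dots,w_n$ and return false if $\mathtt{Prove_n}(\mathcal{R},\mathcal{R}_1w_kw_j,\Gamma)$ returns false for some $0\le k\le n-1$, $k+1\le j\le n$, else true. For $n=0$ step 8 is absent and stability omits $n$-choice consistency. *)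

theory Defs
  imports Main "HOL-Library.Multiset"
begin

datatype fm =
    Atom nat
  | NAtom nat
  | And fm fm
  | Or fm fm
  | Box fm
  | Dia fm
  | Stit fm
  | DStit fm

primrec dual :: "fm \<Rightarrow> fm" where
  "dual (Atom p) = NAtom p"
| "dual (NAtom p) = Atom p"
| "dual (And a b) = Or (dual a) (dual b)"
| "dual (Or a b) = And (dual a) (dual b)"
| "dual (Box a) = Dia (dual a)"
| "dual (Dia a) = Box (dual a)"
| "dual (Stit a) = DStit (dual a)"
| "dual (DStit a) = Stit (dual a)"

type_synonym label = nat
type_synonym rels = "(label \<times> label) multiset"   (* atoms R_1 x y as (x,y) *)
type_synonym lfms = "(label \<times> fm) multiset"

definition labels :: "rels \<Rightarrow> lfms \<Rightarrow> label set" where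
  "labels R G = fst ` set_mset R \<union> snd ` set_mset R \<union> fst ` set_mset G"

definition fresh :: "label \<Rightarrow> rels \<Rightarrow> lfms \<Rightarrow> bool" where
  "fresh v R G \<longleftrightarrow> v \<notin> labels R G"

definition conn :: "rels \<Rightarrow> label \<Rightarrow> label \<Rightarrow> bool" where
  "conn R = (\<lambda>x y. (x, y) \<in># R \<or> (y, x) \<in># R)\<^sup>*\<^sup>*"

inductive deriv :: "nat \<Rightarrow> rels \<Rightarrow> lfms \<Rightarrow> bool" for n :: nat where
  ax_id: "\<lbrakk>(w, Atom p) \<in># G; (w, NAtom p) \<in># G\<rbrakk> \<Longrightarrow> deriv n R G"
| r_and: "\<lbrakk>(w, And a b) \<in># G; deriv n R (add_mset (w, a) G); deriv n R (add_mset (w, b) G)\<rbrakk>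
          \<Longrightarrow> deriv n R G"
| r_or: "\<lbrakk>(w, Or a b) \<in># G; deriv n R (add_mset (w, a) (add_mset (w, b) G))\<rbrakk> \<Longrightarrow> deriv n R G"
| r_box: "\<lbrakk>(w, Box a) \<in># G; fresh v R G; deriv n R (add_mset (v, a) G)\<rbrakk> \<Longrightarrow> deriv n R G"
| r_dia: "\<lbrakk>(w, Dia a) \<in># G; deriv n R (add_mset (u, a) G)\<rbrakk> \<Longrightarrow> deriv n R G"
| r_ioa: "\<lbrakk>fresh v R G; deriv n (add_mset (u, v) R) G\<rbrakk> \<Longrightarrow> deriv n R G"
| r_stit: "\<lbrakk>(w, Stit a) \<in># G; fresh v R G; deriv n (add_mset (w, v) R) (add_mset (v, a) G)\<rbrakk>
           \<Longrightarrow> deriv n R G"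
| r_pr: "\<lbrakk>(w, DStit a) \<in># G; conn R w u; deriv n R (add_mset (u, a) G)\<rbrakk> \<Longrightarrow> deriv n R G"
| r_apc: "\<lbrakk>0 < n; \<forall>k j. k < j \<and> j \<le> n \<longrightarrow> deriv n (add_mset (ws k, ws j) R) G\<rbrakk>
          \<Longrightarrow> deriv n R G"

definition dpath :: "rels \<Rightarrow> label \<Rightarrow> label list \<Rightarrow> label \<Rightarrow> bool" where
  "dpath R x p y \<longleftrightarrow> p \<noteq> [] \<and> hd p = x \<and> last p = y \<and>
     (\<forall>i. Suc i < length p \<longrightarrow> (p ! i, p ! Suc i) \<in># R)"

text \<open>The weakly connected component of w; for forestlike sequents this is CT(w).\<close>
definition CT :: "rels \<Rightarrow> lfms \<Rightarrow> label \<Rightarrow> label set" where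
  "CT R G w = {u \<in> labels R G. conn R w u}"

definition is_root :: "rels \<Rightarrow> lfms \<Rightarrow> label \<Rightarrow> bool" where
  "is_root R G r \<longleftrightarrow> r \<in> labels R G \<and> (\<forall>v \<in> CT R G r. \<exists>!p. dpath R r p v)"

definition forestlike :: "rels \<Rightarrow> lfms \<Rightarrow> bool" where
  "forestlike R G \<longleftrightarrow> (\<forall>w \<in> labels R G. \<exists>r \<in> CT R G w. is_root R G r)"

definition choice_trees :: "rels \<Rightarrow> lfms \<Rightarrow> label set set" where
  "choice_trees R G = CT R G ` labels R G"

definition choice_consistent :: "nat \<Rightarrow> rels \<Rightarrow> lfms \<Rightarrow> bool" where
  "choice_consistent n R G \<longleftrightarrow> card (choice_trees R G) \<le> n"

definition saturated :: "rels \<Rightarrow> lfms \<Rightarrow> label \<Rightarrow> bool" where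
  "saturated R G w \<longleftrightarrow>
     (\<forall>a. (w, a) \<in># G \<longrightarrow> (w, dual a) \<notin># G) \<and>
     (\<forall>a b. (w, Or a b) \<in># G \<longrightarrow> (w, a) \<in># G \<and> (w, b) \<in># G) \<and>
     (\<forall>a b. (w, And a b) \<in># G \<longrightarrow> (w, a) \<in># G \<or> (w, b) \<in># G)"

definition box_realized :: "rels \<Rightarrow> lfms \<Rightarrow> label \<Rightarrow> bool" where
  "box_realized R G w \<longleftrightarrow> (\<forall>a. (w, Box a) \<in># G \<longrightarrow> (\<exists>u. (u, a) \<in># G))"

definition stit_realized :: "rels \<Rightarrow> lfms \<Rightarrow> label \<Rightarrow> bool" where
  "stit_realized R G w \<longleftrightarrow> (\<forall>a. (w, Stit a) \<in># G \<longrightarrow> (\<exists>u \<in> CT R G w. (u, a) \<in># G))"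

definition dia_propagated :: "rels \<Rightarrow> lfms \<Rightarrow> label \<Rightarrow> bool" where
  "dia_propagated R G w \<longleftrightarrow> (\<forall>a. (w, Dia a) \<in># G \<longrightarrow> (\<forall>u \<in> labels R G. (u, a) \<in># G))"

definition dstit_propagated :: "rels \<Rightarrow> lfms \<Rightarrow> label \<Rightarrow> bool" where
  "dstit_propagated R G w \<longleftrightarrow> (\<forall>a. (w, DStit a) \<in># G \<longrightarrow> (\<forall>u \<in> CT R G w. (u, a) \<in># G))"

definition stable :: "nat \<Rightarrow> rels \<Rightarrow> lfms \<Rightarrow> bool" where
  "stable n R G \<longleftrightarrow> forestlike R G \<and>
     (\<forall>w \<in> labels R G. saturated R G w \<and> box_realized R G w \<and> stit_realized R G w \<and>
                       dia_propagated R G w \<and> dstit_propagated R G w) \<and>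
     (0 < n \<longrightarrow> choice_consistent n R G)"

definition c1 :: "rels \<Rightarrow> lfms \<Rightarrow> bool" where
  "c1 R G \<longleftrightarrow> (\<exists>w p. (w, Atom p) \<in># G \<and> (w, NAtom p) \<in># G)"
definition c3i :: "rels \<Rightarrow> lfms \<Rightarrow> bool" where
  "c3i R G \<longleftrightarrow> (\<exists>w a b. (w, Or a b) \<in># G \<and> ((w, a) \<notin># G \<or> (w, b) \<notin># G))"
definition c3ii :: "rels \<Rightarrow> lfms \<Rightarrow> bool" where
  "c3ii R G \<longleftrightarrow> (\<exists>w a b. (w, And a b) \<in># G \<and> (w, a) \<notin># G \<and> (w, b) \<notin># G)"
definition c4 :: "rels \<Rightarrow> lfms \<Rightarrow> bool" where
  "c4 R G \<longleftrightarrow> (\<exists>w a. (w, DStit a) \<in># G \<and> (\<exists>u \<in> CT R G w. (u, a) \<notin># G))"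
definition c5 :: "rels \<Rightarrow> lfms \<Rightarrow> bool" where
  "c5 R G \<longleftrightarrow> (\<exists>w a. (w, Dia a) \<in># G \<and> (\<exists>u \<in> labels R G. (u, a) \<notin># G))"
definition c6 :: "rels \<Rightarrow> lfms \<Rightarrow> bool" where
  "c6 R G \<longleftrightarrow> (\<exists>w a. (w, Stit a) \<in># G \<and> (\<forall>u \<in> CT R G w. (u, a) \<notin># G))"
definition c7 :: "rels \<Rightarrow> lfms \<Rightarrow> bool" where
  "c7 R G \<longleftrightarrow> (\<exists>w a. (w, Box a) \<in># G \<and> (\<forall>u \<in> labels R G. (u, a) \<notin># G))"

text \<open>prove n R G b: some execution of Prove_n(R, G) (over all admissible choices of
  instances and fresh labels) terminates with result b.\<close>
inductive prove :: "nat \<Rightarrow> rels \<Rightarrow> lfms \<Rightarrow> bool \<Rightarrow> bool" for n :: nat where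
  step1: "c1 R G \<Longrightarrow> prove n R G True"
| step2: "\<lbrakk>\<not> c1 R G; stable n R G\<rbrakk> \<Longrightarrow> prove n R G False"
| step3i: "\<lbrakk>\<not> c1 R G; \<not> stable n R G;
            (w, Or a b) \<in># G; (w, a) \<notin># G \<or> (w, b) \<notin># G;
            prove n R (add_mset (w, a) (add_mset (w, b) G)) r\<rbrakk>
           \<Longrightarrow> prove n R G r"
| step3ii: "\<lbrakk>\<not> c1 R G; \<not> stable n R G; \<not> c3i R G;
             (w, And a b) \<in># G; (w, a) \<notin># G; (w, b) \<notin># G;
             prove n R (add_mset (w, a) G) r1; prove n R (add_mset (w, b) G) r2\<rbrakk>
            \<Longrightarrow> prove n R G (r1 \<and> r2)"
| step4: "\<lbrakk>\<not> c1 R G; \<not> stable n R G; \<not> c3i R G; \<not> c3ii R G;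
           (w, DStit a) \<in># G; u \<in> CT R G w; (u, a) \<notin># G;
           prove n R (add_mset (u, a) G) r\<rbrakk>
          \<Longrightarrow> prove n R G r"
| step5: "\<lbrakk>\<not> c1 R G; \<not> stable n R G; \<not> c3i R G; \<not> c3ii R G; \<not> c4 R G;
           (w, Dia a) \<in># G; u \<in> labels R G; (u, a) \<notin># G;
           prove n R (add_mset (u, a) G) r\<rbrakk>
          \<Longrightarrow> prove n R G r"
| step6: "\<lbrakk>\<not> c1 R G; \<not> stable n R G; \<not> c3i R G; \<not> c3ii R G; \<not> c4 R G; \<not> c5 R G;
           (w, Stit a) \<in># G; \<forall>u \<in> CT R G w. (u, a) \<notin># G; fresh v R G;
           prove n (add_mset (w, v) R) (add_mset (v, a) G) r\<rbrakk>
          \<Longrightarrow> prove n R G r"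
| step7: "\<lbrakk>\<not> c1 R G; \<not> stable n R G; \<not> c3i R G; \<not> c3ii R G; \<not> c4 R G; \<not> c5 R G;
           \<not> c6 R G;
           (w, Box a) \<in># G; \<forall>u \<in> labels R G. (u, a) \<notin># G; fresh v R G;
           prove n R (add_mset (v, a) G) r\<rbrakk>
          \<Longrightarrow> prove n R G r"
| step8: "\<lbrakk>0 < n; \<not> c1 R G; \<not> stable n R G; \<not> c3i R G; \<not> c3ii R G; \<not> c4 R G; \<not> c5 R G;
           \<not> c6 R G; \<not> c7 R G;
           \<not> choice_consistent n R G;
           inj_on ws {..n}; \<forall>i \<le> n. is_root R G (ws i);
           \<forall>k j. k < j \<and> j \<le> n \<longrightarrow> prove n (add_mset (ws k, ws j) R) G (res k j)\<rbrakk>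
          \<Longrightarrow> prove n R G (\<forall>k j. k < j \<and> j \<le> n \<longrightarrow> res k j)"

end

theory Submission
  imports Defs
begin

lemma prove_true_deriv: "prove n R G r \<Longrightarrow> r \<Longrightarrow> deriv n R G"
proof (induction rule: prove.induct)
  case (step1 R G)
  then obtain w p where "(w, Atom p) \<in># G" "(w, NAtom p) \<in># G" unfolding c1_def by blast
  thus ?case by (rule deriv.ax_id)
next
  case (step2 R G) thus ?case by simp
next
  case (step3i R G w a b r)
  show ?case by (rule deriv.r_or[OF step3i.hyps(3) step3i.IH[OF step3i.prems]])
next
  case (step3ii R G w a b r1 r2)
  have "r1" "r2" using step3ii.prems by simp_all
  show ?case by (rule deriv.r_and[OF step3ii.hyps(4) step3ii.IH(1)[OF \<open>r1\<close>] step3ii.IH(2)[OF \<open>r2\<close>]])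
next
  case (step4 R G w a u r)
  have "conn R w u" using step4.hyps(6) unfolding CT_def by simp
  show ?case by (rule deriv.r_pr[OF step4.hyps(5) \<open>conn R w u\<close> step4.IH[OF step4.prems]])
next
  case (step5 R G w a u r)
  show ?case by (rule deriv.r_dia[OF step5.hyps(6) step5.IH[OF step5.prems]])
next
  case (step6 R G w a v r)
  show ?case by (rule deriv.r_stit[OF step6.hyps(7) step6.hyps(9) step6.IH[OF step6.prems]])
next
  case (step7 R G w a v r)
  show ?case by (rule deriv.r_box[OF step7.hyps(8) step7.hyps(10) step7.IH[OF step7.prems]])
next
  case (step8 R G ws res)
  have "\<forall>k j. k < j \<and> j \<le> n \<longrightarrow> deriv n (add_mset (ws k, ws j) R) G"
    using step8.IH step8.prems by blast
  thus ?case by (rule deriv.r_apc[OF step8.hyps(1)])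
qed

lemma prove_false_stable: "prove n R G r \<Longrightarrow> \<not> r \<Longrightarrow>
   \<exists>R' G'. set_mset G \<subseteq> set_mset G' \<and> stable n R' G' \<and> \<not> c1 R' G'"
proof (induction rule: prove.induct)
  case (step1 R G) thus ?case by simp
next
  case (step2 R G) thus ?case by blast
next
  case (step3i R G w a b r)
  then obtain R' G' where "set_mset (add_mset (w, a) (add_mset (w, b) G)) \<subseteq> set_mset G'" "stable n R' G'" "\<not> c1 R' G'" by blast
  thus ?case by (intro exI[of _ R'] exI[of _ G']) auto
next
  case (step3ii R G w a b r1 r2)
  hence "(\<not> r1) \<or> (\<not> r2)" by simp
  thus ?case
  proof
    assume "\<not> r1"
    then obtain R' G' where "set_mset (add_mset (w, a) G) \<subseteq> set_mset G'" "stable n R' G'" "\<not> c1 R' G'" using step3ii.IH(1) by blast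
    thus ?case by (intro exI[of _ R'] exI[of _ G']) auto
  next
    assume "\<not> r2"
    then obtain R' G' where "set_mset (add_mset (w, b) G) \<subseteq> set_mset G'" "stable n R' G'" "\<not> c1 R' G'" using step3ii.IH(2) by blast
    thus ?case by (intro exI[of _ R'] exI[of _ G']) auto
  qed
next
  case (step4 R G w a u r)
  then obtain R' G' where "set_mset (add_mset (u, a) G) \<subseteq> set_mset G'" "stable n R' G'" "\<not> c1 R' G'" by blast
  thus ?case by (intro exI[of _ R'] exI[of _ G']) auto
next
  case (step5 R G w a u r)
  then obtain R' G' where "set_mset (add_mset (u, a) G) \<subseteq> set_mset G'" "stable n R' G'" "\<not> c1 R' G'" by blast
  thus ?case by (intro exI[of _ R'] exI[of _ G']) auto
next
  case (step6 R G w a v r)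
  then obtain R' G' where "set_mset (add_mset (v, a) G) \<subseteq> set_mset G'" "stable n R' G'" "\<not> c1 R' G'" by blast
  thus ?case by (intro exI[of _ R'] exI[of _ G']) auto
next
  case (step7 R G w a v r)
  then obtain R' G' where "set_mset (add_mset (v, a) G) \<subseteq> set_mset G'" "stable n R' G'" "\<not> c1 R' G'" by blast
  thus ?case by (intro exI[of _ R'] exI[of _ G']) auto
next
  case (step8 R G ws res)
  then obtain k j where "k < j" "j \<le> n" "\<not> res k j" by blast
  thus ?case using step8.IH by blast
qed

primrec sat :: "label set \<Rightarrow> (label \<Rightarrow> label \<Rightarrow> bool) \<Rightarrow> (nat \<Rightarrow> label \<Rightarrow> bool) \<Rightarrow> label \<Rightarrow> fm \<Rightarrow> bool" where
  "sat W E V x (Atom p) = V p x"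
| "sat W E V x (NAtom p) = (\<not> V p x)"
| "sat W E V x (And a b) = (sat W E V x a \<and> sat W E V x b)"
| "sat W E V x (Or a b) = (sat W E V x a \<or> sat W E V x b)"
| "sat W E V x (Box a) = (\<forall>y\<in>W. sat W E V y a)"
| "sat W E V x (Dia a) = (\<exists>y\<in>W. sat W E V y a)"
| "sat W E V x (Stit a) = (\<forall>y\<in>W. E x y \<longrightarrow> sat W E V y a)"
| "sat W E V x (DStit a) = (\<exists>y\<in>W. E x y \<and> sat W E V y a)"

definition valid :: "label set \<Rightarrow> (label \<Rightarrow> label \<Rightarrow> bool) \<Rightarrow> (nat \<Rightarrow> label \<Rightarrow> bool) \<Rightarrow> rels \<Rightarrow> lfms \<Rightarrow> bool" where
  "valid W E V R G \<longleftrightarrow> (\<forall>I. (\<forall>x. I x \<in> W) \<longrightarrow> (\<forall>p\<in>#R. E (I (fst p)) (I (snd p))) \<longrightarrow>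
      (\<exists>q\<in>#G. sat W E V (I (fst q)) (snd q)))"

lemma conn_E:
  assumes "conn R x y" "\<forall>p\<in>#R. E (I (fst p)) (I (snd p))"
    "\<forall>x. E x x" "\<forall>x y. E x y \<longrightarrow> E y x" "\<forall>x y z. E x y \<longrightarrow> E y z \<longrightarrow> E x z"
  shows "E (I x) (I y)"
  using assms(1) unfolding conn_def
proof (induction rule: rtranclp_induct)
  case base thus ?case using assms(3) by blast
next
  case (step y z)
  have "E (I y) (I z)"
  proof (cases "(y, z) \<in># R")
    case True thus ?thesis using assms(2) by force
  next
    case False
    hence "(z, y) \<in># R" using step.hyps(2) by simp
    hence "E (I z) (I y)" using assms(2) by force
    thus ?thesis using assms(4) by blast
  qed
  thus ?case using step.IH assms(5) by blast
qed

lemma fresh_upd: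
  assumes "fresh v R G"
  shows "(\<forall>p\<in>#R. E ((I(v:=y)) (fst p)) ((I(v:=y)) (snd p))) = (\<forall>p\<in>#R. E (I (fst p)) (I (snd p)))"
    and "(\<exists>q\<in>#G. sat W E V ((I(v:=y)) (fst q)) (snd q)) = (\<exists>q\<in>#G. sat W E V (I (fst q)) (snd q))"
proof -
  have a: "fst p \<noteq> v \<and> snd p \<noteq> v" if "p \<in># R" for p
  proof -
    have "fst p \<in> labels R G" "snd p \<in> labels R G" using that unfolding labels_def by blast+
    thus ?thesis using assms unfolding fresh_def by blast
  qed
  have b: "fst q \<noteq> v" if "q \<in># G" for q
  proof -
    have "fst q \<in> labels R G" using that unfolding labels_def by blast
    thus ?thesis using assms unfolding fresh_def by blast
  qed
  show "(\<forall>p\<in>#R. E ((I(v:=y)) (fst p)) ((I(v:=y)) (snd p))) = (\<forall>p\<in>#R. E (I (fst p)) (I (snd p)))"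
    using a by auto
  show "(\<exists>q\<in>#G. sat W E V ((I(v:=y)) (fst q)) (snd q)) = (\<exists>q\<in>#G. sat W E V (I (fst q)) (snd q))"
    using b by auto
qed

lemma soundness:
  assumes "deriv n R G"
    and refl: "\<forall>x. E x x" and sym: "\<forall>x y. E x y \<longrightarrow> E y x" and tr: "\<forall>x y z. E x y \<longrightarrow> E y z \<longrightarrow> E x z"
    and apc: "0 < n \<longrightarrow> (\<forall>f. (\<forall>i. f i \<in> W) \<longrightarrow> (\<exists>k j. k < j \<and> j \<le> n \<and> E (f k) (f j)))"
  shows "valid W E V R G"
  using assms(1)
proof (induction rule: deriv.induct)
  case (ax_id w p G R)
  show ?case unfolding valid_def
  proof (intro allI impI)
    fix I
    show "\<exists>q\<in>#G. sat W E V (I (fst q)) (snd q)"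
    proof (cases "V p (I w)")
      case True thus ?thesis using ax_id.hyps(1) by force
    next
      case False thus ?thesis using ax_id.hyps(2) by force
    qed
  qed
next
  case (r_and w a b G R)
  show ?case unfolding valid_def
  proof (intro allI impI)
    fix I assume I: "\<forall>x. I x \<in> W" and IR: "\<forall>p\<in>#R. E (I (fst p)) (I (snd p))"
    have h1: "\<exists>q\<in>#add_mset (w, a) G. sat W E V (I (fst q)) (snd q)"
      using r_and.IH(1) I IR unfolding valid_def by blast
    have h2: "\<exists>q\<in>#add_mset (w, b) G. sat W E V (I (fst q)) (snd q)"
      using r_and.IH(2) I IR unfolding valid_def by blast
    show "\<exists>q\<in>#G. sat W E V (I (fst q)) (snd q)"
    proof (rule ccontr)
      assume nq: "\<not> ?thesis"
      hence "sat W E V (I w) a" "sat W E V (I w) b" using h1 h2 by auto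
      hence "sat W E V (I w) (And a b)" by simp
      thus False using nq r_and.hyps(1) by force
    qed
  qed
next
  case (r_or w a b G R)
  show ?case unfolding valid_def
  proof (intro allI impI)
    fix I assume I: "\<forall>x. I x \<in> W" and IR: "\<forall>p\<in>#R. E (I (fst p)) (I (snd p))"
    have h1: "\<exists>q\<in>#add_mset (w, a) (add_mset (w, b) G). sat W E V (I (fst q)) (snd q)"
      using r_or.IH I IR unfolding valid_def by blast
    show "\<exists>q\<in>#G. sat W E V (I (fst q)) (snd q)"
    proof (rule ccontr)
      assume nq: "\<not> ?thesis"
      hence "sat W E V (I w) a \<or> sat W E V (I w) b" using h1 by auto
      hence "sat W E V (I w) (Or a b)" by simp
      thus False using nq r_or.hyps(1) by force
    qed
  qed
next
  case (r_box w a G v R)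
  show ?case unfolding valid_def
  proof (intro allI impI)
    fix I assume I: "\<forall>x. I x \<in> W" and IR: "\<forall>p\<in>#R. E (I (fst p)) (I (snd p))"
    show "\<exists>q\<in>#G. sat W E V (I (fst q)) (snd q)"
    proof (rule ccontr)
      assume nq: "\<not> ?thesis"
      hence "\<not> sat W E V (I w) (Box a)" using r_box.hyps(1) by fastforce
      then obtain y where y: "y \<in> W" "\<not> sat W E V y a" by auto
      have I': "\<forall>x. (I(v:=y)) x \<in> W" using I y by auto
      have "\<exists>q\<in>#add_mset (v, a) G. sat W E V ((I(v:=y)) (fst q)) (snd q)"
        using r_box.IH I' IR fresh_upd(1)[OF r_box.hyps(2)] unfolding valid_def by blast
      thus False using nq y fresh_upd(2)[OF r_box.hyps(2)] by auto
    qed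
  qed
next
  case (r_dia w a G R u)
  show ?case unfolding valid_def
  proof (intro allI impI)
    fix I assume I: "\<forall>x. I x \<in> W" and IR: "\<forall>p\<in>#R. E (I (fst p)) (I (snd p))"
    have "\<exists>q\<in>#add_mset (u, a) G. sat W E V (I (fst q)) (snd q)"
      using r_dia.IH I IR unfolding valid_def by blast
    then consider "sat W E V (I u) a" | "\<exists>q\<in>#G. sat W E V (I (fst q)) (snd q)" by auto
    thus "\<exists>q\<in>#G. sat W E V (I (fst q)) (snd q)"
    proof cases
      case 1
      hence "sat W E V (I w) (Dia a)" using I by auto
      thus ?thesis using r_dia.hyps(1) by force
    qed
  qed
next
  case (r_ioa v R G u)
  show ?case unfolding valid_def
  proof (intro allI impI)
    fix I assume I: "\<forall>x. I x \<in> W" and IR: "\<forall>p\<in>#R. E (I (fst p)) (I (snd p))"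
    have I': "\<forall>x. (I(v:=I u)) x \<in> W" using I by auto
    have "E ((I(v:=I u)) u) ((I(v:=I u)) v)" using refl by auto
    hence "\<forall>p\<in>#add_mset (u, v) R. E ((I(v:=I u)) (fst p)) ((I(v:=I u)) (snd p))"
      using IR fresh_upd(1)[OF r_ioa.hyps(1)] by auto
    hence "\<exists>q\<in>#G. sat W E V ((I(v:=I u)) (fst q)) (snd q)"
      using r_ioa.IH I' unfolding valid_def by blast
    thus "\<exists>q\<in>#G. sat W E V (I (fst q)) (snd q)" using fresh_upd(2)[OF r_ioa.hyps(1)] by auto
  qed
next
  case (r_stit w a G v R)
  show ?case unfolding valid_def
  proof (intro allI impI)
    fix I assume I: "\<forall>x. I x \<in> W" and IR: "\<forall>p\<in>#R. E (I (fst p)) (I (snd p))"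
    show "\<exists>q\<in>#G. sat W E V (I (fst q)) (snd q)"
    proof (rule ccontr)
      assume nq: "\<not> ?thesis"
      hence "\<not> sat W E V (I w) (Stit a)" using r_stit.hyps(1) by fastforce
      then obtain y where y: "y \<in> W" "E (I w) y" "\<not> sat W E V y a" by auto
      have wv: "w \<noteq> v" using r_stit.hyps(1,2) unfolding fresh_def labels_def by force
      have I': "\<forall>x. (I(v:=y)) x \<in> W" using I y by auto
      have "\<forall>p\<in>#add_mset (w, v) R. E ((I(v:=y)) (fst p)) ((I(v:=y)) (snd p))"
        using IR fresh_upd(1)[OF r_stit.hyps(2)] wv y by auto
      hence "\<exists>q\<in>#add_mset (v, a) G. sat W E V ((I(v:=y)) (fst q)) (snd q)"
        using r_stit.IH I' unfolding valid_def by blast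
      thus False using nq y fresh_upd(2)[OF r_stit.hyps(2)] by auto
    qed
  qed
next
  case (r_pr w a G R u)
  show ?case unfolding valid_def
  proof (intro allI impI)
    fix I assume I: "\<forall>x. I x \<in> W" and IR: "\<forall>p\<in>#R. E (I (fst p)) (I (snd p))"
    have "\<exists>q\<in>#add_mset (u, a) G. sat W E V (I (fst q)) (snd q)"
      using r_pr.IH I IR unfolding valid_def by blast
    then consider "sat W E V (I u) a" | "\<exists>q\<in>#G. sat W E V (I (fst q)) (snd q)" by auto
    thus "\<exists>q\<in>#G. sat W E V (I (fst q)) (snd q)"
    proof cases
      case 1
      have "E (I w) (I u)" using conn_E[OF r_pr.hyps(2) IR refl sym tr] .
      hence "sat W E V (I w) (DStit a)" using I 1 by auto
      thus ?thesis using r_pr.hyps(1) by force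
    qed
  qed
next
  case (r_apc ws R G)
  show ?case unfolding valid_def
  proof (intro allI impI)
    fix I assume I: "\<forall>x. I x \<in> W" and IR: "\<forall>p\<in>#R. E (I (fst p)) (I (snd p))"
    obtain k j where kj: "k < j" "j \<le> n" "E (I (ws k)) (I (ws j))"
      using apc[rule_format, OF r_apc.hyps(1), of "\<lambda>i. I (ws i)"] I by auto
    have v: "valid W E V (add_mset (ws k, ws j) R) G" using r_apc.IH kj(1,2) by blast
    have "\<forall>p\<in>#add_mset (ws k, ws j) R. E (I (fst p)) (I (snd p))" using IR kj(3) by simp
    thus "\<exists>q\<in>#G. sat W E V (I (fst q)) (snd q)" using v I unfolding valid_def by blast
  qed
qed

lemma conn_sym: "conn R x y \<Longrightarrow> conn R y x"
  unfolding conn_def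
proof (induction rule: rtranclp_induct)
  case base thus ?case by simp
next
  case (step y z)
  have "(\<lambda>x y. (x, y) \<in># R \<or> (y, x) \<in># R) z y" using step.hyps(2) by blast
  thus ?case by (rule converse_rtranclp_into_rtranclp[OF _ step.IH])
qed

lemma conn_refl: "conn R x x" unfolding conn_def by simp

lemma conn_trans: "conn R x y \<Longrightarrow> conn R y z \<Longrightarrow> conn R x z"
  unfolding conn_def by (rule rtranclp_trans)

lemma finite_labels: "finite (labels R G)"
  unfolding labels_def by simp

lemma labels_G: "(x, a) \<in># G \<Longrightarrow> x \<in> labels R G"
  unfolding labels_def by force

lemma countermodel_false:
  assumes st: "stable n R G" and nc: "\<not> c1 R G"
  shows "(x, a) \<in># G \<Longrightarrow> \<not> sat (labels R G) (conn R) (\<lambda>p y. (y, NAtom p) \<in># G) x a"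
proof (induction a arbitrary: x)
  case (Atom p) thus ?case using nc unfolding c1_def by auto
next
  case (NAtom p) thus ?case by simp
next
  case (And a b)
  have "saturated R G x" using st labels_G[OF And.prems] unfolding stable_def by blast
  hence "(x, a) \<in># G \<or> (x, b) \<in># G" using And.prems unfolding saturated_def by blast
  thus ?case using And.IH by auto
next
  case (Or a b)
  have "saturated R G x" using st labels_G[OF Or.prems] unfolding stable_def by blast
  hence "(x, a) \<in># G \<and> (x, b) \<in># G" using Or.prems unfolding saturated_def by blast
  thus ?case using Or.IH by auto
next
  case (Box a)
  have "box_realized R G x" using st labels_G[OF Box.prems] unfolding stable_def by blast
  then obtain u where u: "(u, a) \<in># G" using Box.prems unfolding box_realized_def by blast
  thus ?case using Box.IH[OF u] labels_G[OF u] by auto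
next
  case (Dia a)
  have "dia_propagated R G x" using st labels_G[OF Dia.prems] unfolding stable_def by blast
  hence "\<forall>u \<in> labels R G. (u, a) \<in># G" using Dia.prems unfolding dia_propagated_def by blast
  thus ?case using Dia.IH by auto
next
  case (Stit a)
  have "stit_realized R G x" using st labels_G[OF Stit.prems] unfolding stable_def by blast
  then obtain u where u: "u \<in> CT R G x" "(u, a) \<in># G" using Stit.prems unfolding stit_realized_def by blast
  thus ?case using Stit.IH[OF u(2)] unfolding CT_def by auto
next
  case (DStit a)
  have "dstit_propagated R G x" using st labels_G[OF DStit.prems] unfolding stable_def by blast
  hence "\<forall>u \<in> CT R G x. (u, a) \<in># G" using DStit.prems unfolding dstit_propagated_def by blast
  thus ?case using DStit.IH unfolding CT_def by auto
qed

lemma countermodel_apc: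
  assumes st: "stable n R G" and n: "0 < n" and f: "\<forall>i. f i \<in> labels R G"
  shows "\<exists>k j. k < j \<and> j \<le> n \<and> conn R (f k) (f j)"
proof -
  have cc: "card (choice_trees R G) \<le> n" using st n unfolding stable_def choice_consistent_def by blast
  define g where "g i = CT R G (f i)" for i
  have sub: "g ` {..n} \<subseteq> choice_trees R G" using f unfolding g_def choice_trees_def by auto
  have fin: "finite (choice_trees R G)" unfolding choice_trees_def using finite_labels by simp
  have "card (g ` {..n}) \<le> n" using card_mono[OF fin sub] cc by linarith
  hence "\<not> inj_on g {..n}" using card_image[of g "{..n}"] by auto
  then obtain i i' where ii: "i \<le> n" "i' \<le> n" "i \<noteq> i'" "g i = g i'" unfolding inj_on_def by auto
  have "f i \<in> g i" unfolding g_def CT_def using f conn_refl by auto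
  hence c: "conn R (f i') (f i)" using ii(4) unfolding g_def CT_def by auto
  show ?thesis
  proof (cases "i < i'")
    case True thus ?thesis using ii conn_sym[OF c] by blast
  next
    case False hence "i' < i" using ii(3) by simp
    thus ?thesis using ii c by blast
  qed
qed

theorem theorem5:
  fixes n :: nat and \<phi> :: fm and w :: label
  shows "(prove n {#} {#(w, \<phi>)#} True \<longrightarrow> deriv n {#} {#(w, \<phi>)#}) \<and>
         (prove n {#} {#(w, \<phi>)#} False \<longrightarrow> \<not> deriv n {#} {#(w, \<phi>)#})"
proof (intro conjI impI notI)
  assume "prove n {#} {#(w, \<phi>)#} True"
  thus "deriv n {#} {#(w, \<phi>)#}" using prove_true_deriv by blast
next
  assume p: "prove n {#} {#(w, \<phi>)#} False" and d: "deriv n {#} {#(w, \<phi>)#}"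
  obtain R' G' where h: "set_mset {#(w, \<phi>)#} \<subseteq> set_mset G'" "stable n R' G'" "\<not> c1 R' G'"
    using prove_false_stable[OF p] by blast
  define L where "L = labels R' G'"
  define V where "V = (\<lambda>p y. (y, NAtom p) \<in># G')"
  have wG: "(w, \<phi>) \<in># G'" using h(1) by simp
  have wL: "w \<in> L" unfolding L_def using labels_G[OF wG] .
  have v: "valid L (conn R') V {#} {#(w, \<phi>)#}"
  proof (rule soundness[OF d])
    show "\<forall>x. conn R' x x" using conn_refl by blast
    show "\<forall>x y. conn R' x y \<longrightarrow> conn R' y x" using conn_sym by blast
    show "\<forall>x y z. conn R' x y \<longrightarrow> conn R' y z \<longrightarrow> conn R' x z" using conn_trans by blast
    show "0 < n \<longrightarrow> (\<forall>f. (\<forall>i. f i \<in> L) \<longrightarrow> (\<exists>k j. k < j \<and> j \<le> n \<and> conn R' (f k) (f j)))"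
      using countermodel_apc[OF h(2)] unfolding L_def by blast
  qed
  define I where "I x = (if x \<in> L then x else w)" for x
  have I: "\<forall>x. I x \<in> L" unfolding I_def using wL by auto
  have "sat L (conn R') V (I w) \<phi>" using v I unfolding valid_def by simp
  hence "sat L (conn R') V w \<phi>" unfolding I_def using wL by simp
  thus False using countermodel_false[OF h(2,3) wG] unfolding L_def V_def by blast
qed

end
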